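(* Let $L\in R[x][\partial]$ have positive order $r$ and let $k\ge r$. Then $R[x][\partial]\cdot M_k(L)=R[x][\partial]\cdot M_{k+1}(L)$ if and only if $\sigma(I_k)=I_{k+1}$.
   Context: $R$ is a principal ideal domain with quotient field $Q_R$; $\sigma$ is an $R$-automorphism of $R[x]$ with $\sigma(x)=\gamma x+\tau$ ($\gamma,\tau\in R$, $\gamma$ a unit), $\delta$ an $R$-linear $\sigma$-derivation with $\deg\delta(x)\le 1$; $R[x][\partial]$ is the Ore algebra with $\partial p=\sigma(p)\partial+\delta(p)$, inside $Q_R(x)[\partial]$. $\mathrm{cont}(L)=Q_R(x)[\partial]L\cap R[x][\partial]$; $M_k(L)=\{P\in\mathrm{cont}(L):\deg_\partial P\le k\}$; $I_k=\{[\partial^k]P:P\in M_k(L)\}\cup\{0\}$, an ideal of $R[x]$, where $[\partial^k]P$ is the coefficient of $\partial^k$ in $P$. $R[x][\partial]\cdot S$ denotes the left ideal generated by $S$, and $\sigma(I_k)=\{\sigma(f):f\in I_k\}$. *)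

theory Defs
  imports "HOL-Computational_Algebra.Polynomial" "HOL-Computational_Algebra.Fraction_Field"
begin

definition is_ring_ideal :: "'a::comm_ring_1 set \<Rightarrow> bool" where
  "is_ring_ideal I \<longleftrightarrow> 0 \<in> I \<and> (\<forall>a\<in>I. \<forall>b\<in>I. a + b \<in> I) \<and> (\<forall>r. \<forall>a\<in>I. r * a \<in> I)"

definition is_pid :: "'a::idom itself \<Rightarrow> bool" where
  "is_pid _ \<longleftrightarrow> (\<forall>I::'a set. is_ring_ideal I \<longrightarrow> (\<exists>g. I = {r * g | r. True}))"

text \<open>An Ore polynomial \<open>\<Sum> c_i \<partial>^i\<close> over a commutative coefficient ring is represented by
  the polynomial whose \<open>i\<close>-th coefficient is \<open>c_i\<close> (coefficients written on the left).
  Multiplication is governed by \<open>\<partial> c = \<sigma>(c) \<partial> + \<delta>(c)\<close>.\<close>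

definition ore_D :: "('k::comm_ring_1 \<Rightarrow> 'k) \<Rightarrow> ('k \<Rightarrow> 'k) \<Rightarrow> 'k poly \<Rightarrow> 'k poly" where
  "ore_D \<sigma> \<delta> P = pCons 0 (map_poly \<sigma> P) + map_poly \<delta> P"
  \<comment> \<open>left multiplication by \<open>\<partial>\<close>\<close>

definition ore_mult :: "('k::comm_ring_1 \<Rightarrow> 'k) \<Rightarrow> ('k \<Rightarrow> 'k) \<Rightarrow> 'k poly \<Rightarrow> 'k poly \<Rightarrow> 'k poly" where
  "ore_mult \<sigma> \<delta> A B = (\<Sum>i\<le>degree A. smult (coeff A i) ((ore_D \<sigma> \<delta> ^^ i) B))"

definition ore_left_ideal :: "('k::comm_ring_1 \<Rightarrow> 'k) \<Rightarrow> ('k \<Rightarrow> 'k) \<Rightarrow> 'k poly set \<Rightarrow> 'k poly set" where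
  "ore_left_ideal \<sigma> \<delta> S =
     {P. \<exists>xs. set (map snd xs) \<subseteq> S \<and> P = sum_list (map (\<lambda>(A, s). ore_mult \<sigma> \<delta> A s) xs)}"

definition sig :: "'a::idom \<Rightarrow> 'a \<Rightarrow> 'a poly \<Rightarrow> 'a poly" where
  "sig \<gamma> \<tau> p = pcompose p [:\<tau>, \<gamma>:]"

text \<open>Extension of \<open>\<sigma>\<close> and \<open>\<delta>\<close> to the quotient field \<open>Q_R(x) = Frac(R[x])\<close>:
  \<open>\<sigma>(p/q) = \<sigma>(p)/\<sigma>(q)\<close> and \<open>\<delta>(p/q) = (\<delta>(p)\<sigma>(q) - \<sigma>(p)\<delta>(q)) / (\<sigma>(q) q)\<close>
  (the unique extension of a \<open>\<sigma>\<close>-derivation with \<open>\<delta>(ab) = \<sigma>(a)\<delta>(b) + \<delta>(a)b\<close>).\<close>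
definition frac_rep :: "'b::idom fract \<Rightarrow> 'b \<times> 'b" where
  "frac_rep f = (SOME (p, q). q \<noteq> 0 \<and> f = Fract p q)"

definition sig_ext :: "('b::idom \<Rightarrow> 'b) \<Rightarrow> 'b fract \<Rightarrow> 'b fract" where
  "sig_ext s f = (case frac_rep f of (p, q) \<Rightarrow> Fract (s p) (s q))"

definition del_ext :: "('b::idom \<Rightarrow> 'b) \<Rightarrow> ('b \<Rightarrow> 'b) \<Rightarrow> 'b fract \<Rightarrow> 'b fract" where
  "del_ext s d f = (case frac_rep f of (p, q) \<Rightarrow> Fract (d p * s q - s p * d q) (s q * q))"

definition ore_embed :: "'b::idom poly \<Rightarrow> 'b fract poly" where
  "ore_embed P = map_poly (\<lambda>c. Fract c 1) P"

text \<open>\<open>cont(L) = Q_R(x)[\<partial>] L \<inter> R[x][\<partial>]\<close>.\<close>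
definition cont :: "'a::idom \<Rightarrow> 'a \<Rightarrow> ('a poly \<Rightarrow> 'a poly) \<Rightarrow> 'a poly poly \<Rightarrow> 'a poly poly set" where
  "cont \<gamma> \<tau> \<delta> L = {P. \<exists>A. ore_embed P =
      ore_mult (sig_ext (sig \<gamma> \<tau>)) (del_ext (sig \<gamma> \<tau>) \<delta>) A (ore_embed L)}"

definition Mk :: "'a::idom \<Rightarrow> 'a \<Rightarrow> ('a poly \<Rightarrow> 'a poly) \<Rightarrow> 'a poly poly \<Rightarrow> nat \<Rightarrow> 'a poly poly set" where
  "Mk \<gamma> \<tau> \<delta> L k = {P \<in> cont \<gamma> \<tau> \<delta> L. degree P \<le> k}"

definition Ik :: "'a::idom \<Rightarrow> 'a \<Rightarrow> ('a poly \<Rightarrow> 'a poly) \<Rightarrow> 'a poly poly \<Rightarrow> nat \<Rightarrow> 'a poly set" where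
  "Ik \<gamma> \<tau> \<delta> L k = {coeff P k | P. P \<in> Mk \<gamma> \<tau> \<delta> L k} \<union> {0}"

end

theory Submission
  imports Defs
begin

locale fder =
  fixes s d :: "'b::idom \<Rightarrow> 'b"
  assumes s_add: "\<And>x y. s (x + y) = s x + s y"
    and s_mult: "\<And>x y. s (x * y) = s x * s y"
    and s_nz: "\<And>x. x \<noteq> 0 \<Longrightarrow> s x \<noteq> 0"
    and d_add: "\<And>x y. d (x + y) = d x + d y"
    and d_mult: "\<And>x y. d (x * y) = s x * d y + d x * y"
begin

lemma s0: "s 0 = 0" using s_add[of 0 0] by (metis add.right_neutral add_left_cancel)
lemma d0: "d 0 = 0" using d_add[of 0 0] by (metis add.right_neutral add_left_cancel)
lemma comm: "d b * (s a - a) = d a * (s b - b)"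
  using d_mult[of a b] d_mult[of b a] by (simp add: algebra_simps)

lemma frac_rep_ok: "snd (frac_rep f) \<noteq> 0 \<and> f = Fract (fst (frac_rep f)) (snd (frac_rep f))"
proof -
  obtain a b where "f = Fract a b" "b \<noteq> 0" by (cases f)
  hence "\<exists>x. (case x of (p, q) \<Rightarrow> q \<noteq> 0 \<and> f = Fract p q)" by auto
  from someI_ex[OF this] show ?thesis unfolding frac_rep_def by (auto split: prod.splits)
qed

lemma sig_ext_Fract: assumes "q \<noteq> 0" shows "sig_ext s (Fract p q) = Fract (s p) (s q)"
proof -
  obtain p' q' where r: "frac_rep (Fract p q) = (p', q')" by (cases "frac_rep (Fract p q)")
  with frac_rep_ok[of "Fract p q"] have q': "q' \<noteq> 0" and e: "Fract p q = Fract p' q'" by auto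
  from e have "p * q' = p' * q" using assms q' by (simp add: eq_fract)
  hence "s p * s q' = s p' * s q" by (metis s_mult)
  thus ?thesis unfolding sig_ext_def r using assms q' s_nz by (simp add: eq_fract)
qed

lemma del_ext_Fract: assumes "q \<noteq> 0"
  shows "del_ext s d (Fract p q) = Fract (d p * s q - s p * d q) (s q * q)"
proof -
  obtain p' q' where r: "frac_rep (Fract p q) = (p', q')" by (cases "frac_rep (Fract p q)")
  with frac_rep_ok[of "Fract p q"] have q': "q' \<noteq> 0" and e: "Fract p q = Fract p' q'" by auto
  from e have G: "p * q' = p' * q" using assms q' by (simp add: eq_fract)
  hence E: "s p * s q' = s p' * s q" by (metis s_mult)
  from G have F: "s p * d q' + d p * q' = s p' * d q + d p' * q" by (metis d_mult)
  have C: "d q' * (s q - q) = d q * (s q' - q')" by (rule comm)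
  have "(d p' * s q' - s p' * d q') * (s q * q) = (d p * s q - s p * d q) * (s q' * q')"
  proof -
    have "(d p' * s q' - s p' * d q') * (s q * q) = s q' * s q * (d p' * q) - (s p' * s q) * d q' * q"
      by (simp add: algebra_simps)
    also have "\<dots> = s q' * s q * (s p * d q' + d p * q' - s p' * d q) - (s p * s q') * d q' * q"
      using F E by (simp add: algebra_simps)
    also have "\<dots> = s q' * s q * (s p * d q' + d p * q') - s q' * d q * (s p' * s q) - (s p * s q') * d q' * q"
      by (simp add: algebra_simps)
    also have "\<dots> = s q' * s q * (s p * d q' + d p * q') - s q' * d q * (s p * s q') - (s p * s q') * d q' * q"
      using E by simp
    also have "\<dots> = s p * s q' * (d q' * (s q - q)) + s q' * s q * d p * q' - s q' * d q * (s p * s q')"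
      by (simp add: algebra_simps)
    also have "\<dots> = s p * s q' * (d q * (s q' - q')) + s q' * s q * d p * q' - s q' * d q * (s p * s q')"
      using C by simp
    also have "\<dots> = (d p * s q - s p * d q) * (s q' * q')" by (simp add: algebra_simps)
    finally show ?thesis .
  qed
  thus ?thesis unfolding del_ext_def r using assms q' s_nz by (simp add: eq_fract)
qed

lemma s1: "s 1 = 1"
proof -
  have "s 1 * s 1 = s 1 * 1" using s_mult[of 1 1] by simp
  moreover have "s 1 \<noteq> 0" using s_nz by simp
  ultimately show ?thesis by simp
qed

lemma d1: "d 1 = 0"
proof -
  have "d 1 + 0 = d 1 + d 1" using d_mult[of 1 1] s1 by simp
  thus ?thesis by (metis add_left_cancel)
qed

abbreviation "se \<equiv> sig_ext s"
abbreviation "de \<equiv> del_ext s d"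

lemma se_emb: "se (Fract c 1) = Fract (s c) 1"
  by (simp add: sig_ext_Fract s1)
lemma de_emb: "de (Fract c 1) = Fract (d c) 1"
  by (simp add: del_ext_Fract s1 d1)

lemma se_add: "se (x + y) = se x + se y"
proof (cases x; cases y)
  fix a b c e assume x: "x = Fract a b" "b \<noteq> 0" and y: "y = Fract c e" "e \<noteq> 0"
  thus ?thesis using s_nz by (simp add: sig_ext_Fract s_add s_mult algebra_simps)
qed

lemma se_mult: "se (x * y) = se x * se y"
proof (cases x; cases y)
  fix a b c e assume x: "x = Fract a b" "b \<noteq> 0" and y: "y = Fract c e" "e \<noteq> 0"
  thus ?thesis using s_nz by (simp add: sig_ext_Fract s_mult)
qed

lemma de_add: "de (x + y) = de x + de y"
proof (cases x; cases y)
  fix a b c e assume x: "x = Fract a b" "b \<noteq> 0" and y: "y = Fract c e" "e \<noteq> 0"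
  have sb: "s b \<noteq> 0" "s e \<noteq> 0" using s_nz x y by auto
  have D: "d b * (s e - e) - d e * (s b - b) = 0" using comm[of b e] by simp
  have "d(a*e+c*b)*s(b*e) - s(a*e+c*b)*d(b*e) - ((d a * s b - s a * d b) * (s e * e) + (d c * s e - s c * d e) * (s b * b))
     = (s c * s b) * (d b * (s e - e) - d e * (s b - b)) + s b * s e * (d c * (s b - b) - d b * (s c - c))"
    by (simp add: d_add d_mult s_add s_mult algebra_simps)
  hence n: "d(a*e+c*b)*s(b*e) - s(a*e+c*b)*d(b*e) = (d a * s b - s a * d b) * (s e * e) + (d c * s e - s c * d e) * (s b * b)"
    using D comm[of b c] by simp
  have "de (x+y) = Fract (d(a*e+c*b)*s(b*e) - s(a*e+c*b)*d(b*e)) (s(b*e)*(b*e))"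
    using x y by (simp add: del_ext_Fract)
  also have "\<dots> = Fract ((d a * s b - s a * d b) * (s e * e) + (d c * s e - s c * d e) * (s b * b)) (s(b*e)*(b*e))"
    by (simp only: n)
  also have "\<dots> = de x + de y" using x y sb
    by (simp add: del_ext_Fract eq_fract s_mult algebra_simps)
  finally show ?thesis .
qed

lemma de_mult: "de (x * y) = se x * de y + de x * y"
proof (cases x; cases y)
  fix a b c e assume x: "x = Fract a b" "b \<noteq> 0" and y: "y = Fract c e" "e \<noteq> 0"
  have sb: "s b \<noteq> 0" "s e \<noteq> 0" using s_nz x y by auto
  have D1: "d c * (s b - b) - d b * (s c - c) = 0" using comm[of b c] by simp
  have D2: "d e * (s b - b) - d b * (s e - e) = 0" using comm[of b e] by simp
  have "(d(a*c)*s(b*e) - s(a*c)*d(b*e)) - (s a * (d c * s e - s c * d e) * b + (d a * s b - s a * d b) * c * s e)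
    = s a * (s e * (d c * (s b - b) - d b * (s c - c)) - s c * (d e * (s b - b) - d b * (s e - e)))"
    by (simp add: d_add d_mult s_add s_mult algebra_simps)
  hence n: "d(a*c)*s(b*e) - s(a*c)*d(b*e) = s a * (d c * s e - s c * d e) * b + (d a * s b - s a * d b) * c * s e"
    using D1 D2 by simp
  have "de (x*y) = Fract (d(a*c)*s(b*e) - s(a*c)*d(b*e)) (s(b*e)*(b*e))"
    using x y by (simp add: del_ext_Fract)
  also have "\<dots> = Fract (s a * (d c * s e - s c * d e) * b + (d a * s b - s a * d b) * c * s e) (s(b*e)*(b*e))"
    by (simp only: n)
  also have "\<dots> = se x * de y + de x * y" using x y sb
    by (simp add: del_ext_Fract sig_ext_Fract eq_fract s_mult algebra_simps)
  finally show ?thesis .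
qed

lemma se0: "se 0 = 0" using se_add[of 0 0] by (metis add.right_neutral add_left_cancel)
lemma de0: "de 0 = 0" using de_add[of 0 0] by (metis add.right_neutral add_left_cancel)

end

locale ore =
  fixes s d :: "'k::comm_ring_1 \<Rightarrow> 'k"
  assumes s_add: "\<And>x y. s (x + y) = s x + s y"
    and s_mult: "\<And>x y. s (x * y) = s x * s y"
    and d_add: "\<And>x y. d (x + y) = d x + d y"
    and d_mult: "\<And>x y. d (x * y) = s x * d y + d x * y"
begin

lemma s0: "s 0 = 0" using s_add[of 0 0] by (metis add.right_neutral add_left_cancel)
lemma d0: "d 0 = 0" using d_add[of 0 0] by (metis add.right_neutral add_left_cancel)

abbreviation "D \<equiv> ore_D s d"

lemma coeff_D: "coeff (D X) n = (if n = 0 then 0 else s (coeff X (n - 1))) + d (coeff X n)"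
  by (cases n) (simp_all add: ore_D_def coeff_map_poly s0 d0)

lemma D_add: "D (X + Y) = D X + D Y"
  by (rule poly_eqI) (simp add: coeff_D s_add d_add algebra_simps)

lemma D_smult: "D (smult c X) = smult (s c) (D X) + smult (d c) X"
  by (rule poly_eqI) (simp add: coeff_D s_mult d_mult algebra_simps)

lemma D_0: "D 0 = 0"
  by (rule poly_eqI) (simp add: coeff_D s0 d0)

lemma D_minus: "D (- X) = - D X"
  using D_add[of X "- X"] D_0 by (simp add: eq_neg_iff_add_eq_0 add.commute)

lemma D_diff: "D (X - Y) = D X - D Y"
  using D_add[of X "- Y"] D_minus[of Y] by simp

lemma D_sum: "D (sum f S) = (\<Sum>x\<in>S. D (f x))"
  by (induction S rule: infinite_finite_induct) (simp_all add: D_0 D_add)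

lemma D_sum_list: "D (sum_list (map f xs)) = sum_list (map (\<lambda>x. D (f x)) xs)"
  by (induction xs) (simp_all add: D_0 D_add)

lemma Dpow_add: "(D ^^ j) (X + Y) = (D ^^ j) X + (D ^^ j) Y"
  by (induction j) (simp_all add: D_add)

lemma Dpow_0: "(D ^^ j) 0 = 0"
  by (induction j) (simp_all add: D_0)

lemma degree_D: "degree X \<le> n \<Longrightarrow> degree (D X) \<le> Suc n"
  by (rule degree_le) (auto simp: coeff_D coeff_eq_0 s0 d0)

lemma coeff_D_top: "degree X \<le> n \<Longrightarrow> coeff (D X) (Suc n) = s (coeff X n)"
  by (simp add: coeff_D coeff_eq_0 d0)

lemma degree_Dpow: "degree X \<le> n \<Longrightarrow> degree ((D ^^ j) X) \<le> n + j"
  by (induction j) (auto intro: degree_D)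

lemma coeff_Dpow_top: "degree X \<le> n \<Longrightarrow> coeff ((D ^^ j) X) (n + j) = (s ^^ j) (coeff X n)"
proof (induction j)
  case (Suc j)
  have "degree ((D ^^ j) X) \<le> n + j" by (rule degree_Dpow[OF Suc.prems])
  from coeff_D_top[OF this] Suc show ?case by simp
qed simp

lemma ore_mult_N: "degree A \<le> N \<Longrightarrow> ore_mult s d A X = (\<Sum>i\<le>N. smult (coeff A i) ((D ^^ i) X))"
  unfolding ore_mult_def
  by (rule sum.mono_neutral_left) (auto simp: coeff_eq_0)

lemma ore_mult_add1: "ore_mult s d (A + B) X = ore_mult s d A X + ore_mult s d B X"
proof -
  let ?N = "max (degree A) (degree B)"
  have "degree (A + B) \<le> ?N" by (rule degree_add_le) auto
  thus ?thesis
    by (simp add: ore_mult_N[of _ ?N] sum.distrib[symmetric] smult_add_left)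
qed

lemma ore_mult_smult1: "ore_mult s d (smult c A) X = smult c (ore_mult s d A X)"
proof -
  have dg: "degree (smult c A) \<le> degree A" by (rule degree_smult_le)
  have ss: "smult c (\<Sum>i\<in>S. f i) = (\<Sum>i\<in>S. smult c (f i))" for S and f :: "nat \<Rightarrow> 'k poly"
    by (induct S rule: infinite_finite_induct) (auto simp: smult_add_right)
  from ore_mult_N[OF dg, of X] show ?thesis by (simp add: ss ore_mult_def)
qed

lemma ore_mult_add2: "ore_mult s d A (X + Y) = ore_mult s d A X + ore_mult s d A Y"
  by (simp add: ore_mult_def Dpow_add smult_add_right sum.distrib)

lemma ore_mult_zero2: "ore_mult s d A 0 = 0"
  by (simp add: ore_mult_def Dpow_0)

lemma ore_mult_zero1: "ore_mult s d 0 X = 0"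
  by (simp add: ore_mult_def)

lemma ore_mult_one: "ore_mult s d 1 X = X"
  by (simp add: ore_mult_def)

lemma ore_mult_pCons0: "ore_mult s d (pCons 0 A) X = ore_mult s d A (D X)"
proof -
  have "degree (pCons 0 A) \<le> Suc (degree A)" by (simp add: degree_pCons_le)
  hence "ore_mult s d (pCons 0 A) X = (\<Sum>i\<le>Suc (degree A). smult (coeff (pCons 0 A) i) ((D ^^ i) X))"
    by (rule ore_mult_N)
  also have "\<dots> = (\<Sum>i\<le>degree A. smult (coeff A i) ((D ^^ Suc i) X))"
    by (subst sum.atMost_Suc_shift) simp
  also have "\<dots> = ore_mult s d A (D X)"
    by (simp add: ore_mult_def funpow_swap1)
  finally show ?thesis .
qed

lemma ore_mult_D1: "ore_mult s d (D A) X = D (ore_mult s d A X)"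
proof -
  let ?N = "degree A"
  have dm: "degree (map_poly f A) \<le> ?N" for f :: "'k \<Rightarrow> 'k" by (rule map_poly_degree_leq)
  have "ore_mult s d (D A) X = ore_mult s d (map_poly s A) (D X) + ore_mult s d (map_poly d A) X"
    by (simp add: ore_D_def ore_mult_add1 ore_mult_pCons0)
  also have "\<dots> = (\<Sum>i\<le>?N. smult (s (coeff A i)) (D ((D ^^ i) X))) + (\<Sum>i\<le>?N. smult (d (coeff A i)) ((D ^^ i) X))"
    by (simp add: ore_mult_N[OF dm] coeff_map_poly s0 d0 funpow_swap1)
  also have "\<dots> = D (ore_mult s d A X)"
    by (simp add: ore_mult_def D_sum D_smult sum.distrib)
  finally show ?thesis .
qed

end

context ore
begin

definition tsum :: "('k \<times> nat \<times> 'k poly) list \<Rightarrow> 'k poly" where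
  "tsum xs = sum_list (map (\<lambda>(a, j, P). smult a ((D ^^ j) P)) xs)"

lemma tsum_Nil[simp]: "tsum [] = 0" by (simp add: tsum_def)
lemma tsum_Cons[simp]: "tsum ((a, j, P) # xs) = smult a ((D ^^ j) P) + tsum xs"
  by (simp add: tsum_def)
lemma tsum_append[simp]: "tsum (xs @ ys) = tsum xs + tsum ys"
  by (simp add: tsum_def)

lemma degree_tsum:
  "(\<forall>(a, j, P)\<in>set xs. degree P \<le> k \<and> j \<le> m) \<Longrightarrow> degree (tsum xs) \<le> k + m"
proof (induction xs)
  case (Cons x xs)
  obtain a j P where x: "x = (a, j, P)" by (cases x) auto
  have "degree ((D ^^ j) P) \<le> k + j" using Cons.prems x by (intro degree_Dpow) auto
  moreover have "j \<le> m" using Cons.prems x by auto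
  ultimately have "degree (smult a ((D ^^ j) P)) \<le> k + m"
    using degree_smult_le[of a "(D ^^ j) P"] by linarith
  moreover have "degree (tsum xs) \<le> k + m" using Cons by auto
  ultimately show ?case using x by (auto intro: degree_add_le)
qed simp

lemma spow_0: "(s ^^ n) 0 = 0" by (induction n) (simp_all add: s0)

lemma comm_D:
  "\<exists>cs. (\<forall>(c, j)\<in>set cs. j < n) \<and>
     smult ((s ^^ n) b) ((D ^^ n) X) = (D ^^ n) (smult b X) + sum_list (map (\<lambda>(c, j). smult c ((D ^^ j) X)) cs)"
proof (induction n)
  case 0
  show ?case by (rule exI[of _ "[]"]) simp
next
  case (Suc n)
  then obtain cs where cs: "\<forall>(c, j)\<in>set cs. j < n"
    and e: "smult ((s ^^ n) b) ((D ^^ n) X) = (D ^^ n) (smult b X) + sum_list (map (\<lambda>(c, j). smult c ((D ^^ j) X)) cs)"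
    by blast
  define cs' where "cs' = concat (map (\<lambda>(c, j). [(s c, Suc j), (d c, j)]) cs) @ [(- d ((s ^^ n) b), n)]"
  have bnd: "\<forall>(c, j)\<in>set cs'. j < Suc n" using cs unfolding cs'_def by fastforce
  have dl: "D (sum_list (map (\<lambda>(c, j). smult c ((D ^^ j) X)) ys))
      = sum_list (map (\<lambda>(c, j). smult c ((D ^^ j) X)) (concat (map (\<lambda>(c, j). [(s c, Suc j), (d c, j)]) ys)))" for ys
    by (induction ys) (auto simp: D_0 D_add D_smult)
  have "smult ((s ^^ Suc n) b) ((D ^^ Suc n) X) = D (smult ((s ^^ n) b) ((D ^^ n) X)) - smult (d ((s ^^ n) b)) ((D ^^ n) X)"
    by (simp add: D_smult)
  also have "\<dots> = (D ^^ Suc n) (smult b X) + sum_list (map (\<lambda>(c, j). smult c ((D ^^ j) X)) cs')"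
    unfolding e by (simp add: D_add dl cs'_def)
  finally show ?case using bnd by blast
qed

lemma step_lemma:
  assumes surj: "\<And>a. \<exists>b. s b = a"
    and Kadd: "\<And>P Q. P \<in> K \<Longrightarrow> Q \<in> K \<Longrightarrow> P + Q \<in> K"
    and Ksmult: "\<And>c P. P \<in> K \<Longrightarrow> smult c P \<in> K" and K0: "0 \<in> K"
  shows "(\<forall>(a, j, P)\<in>set xs. P \<in> K \<and> degree P \<le> k \<and> j \<le> Suc m) \<Longrightarrow>
    \<exists>P' ys. P' \<in> K \<and> degree P' \<le> k \<and> (\<forall>(a, j, P)\<in>set ys. P \<in> K \<and> degree P \<le> k \<and> j \<le> m)
      \<and> tsum xs = (D ^^ Suc m) P' + tsum ys"
proof (induction xs)
  case Nil
  show ?case by (rule exI[of _ 0], rule exI[of _ "[]"]) (simp add: K0 Dpow_0 D_0)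
next
  case (Cons x xs)
  obtain a j P where x: "x = (a, j, P)" by (cases x) auto
  have "\<forall>(a, j, P)\<in>set xs. P \<in> K \<and> degree P \<le> k \<and> j \<le> Suc m" using Cons.prems by auto
  from Cons.IH[OF this] obtain P0 ys0 where P0: "P0 \<in> K" "degree P0 \<le> k"
    and ys0: "\<forall>(a, j, P)\<in>set ys0. P \<in> K \<and> degree P \<le> k \<and> j \<le> m"
    and e0: "tsum xs = (D ^^ Suc m) P0 + tsum ys0" by blast
  have P: "P \<in> K" "degree P \<le> k" "j \<le> Suc m" using Cons.prems x by auto
  show ?case
  proof (cases "j \<le> m")
    case True
    have a1: "\<forall>(a, j, P)\<in>set ((a, j, P) # ys0). P \<in> K \<and> degree P \<le> k \<and> j \<le> m"
      using ys0 P True by auto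
    have "tsum (x # xs) = (D ^^ Suc m) P0 + tsum ((a, j, P) # ys0)" using x e0 by (simp add: algebra_simps)
    thus ?thesis using a1 P0 by blast
  next
    case False
    hence j: "j = Suc m" using P by simp
    have "\<exists>b. (s ^^ n) b = a" for n
    proof (induction n arbitrary: a)
      case (Suc n)
      obtain b where "s b = a" using surj by blast
      moreover obtain b' where "(s ^^ n) b' = b" using Suc by blast
      ultimately show ?case by (metis funpow.simps(2) comp_apply)
    qed simp
    then obtain b where b: "(s ^^ Suc m) b = a" by blast
    obtain cs where cs: "\<forall>(c, i)\<in>set cs. i < Suc m"
      and ce: "smult ((s ^^ Suc m) b) ((D ^^ Suc m) P) = (D ^^ Suc m) (smult b P) + sum_list (map (\<lambda>(c, i). smult c ((D ^^ i) P)) cs)"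
      using comm_D by blast
    have tl: "tsum (map (\<lambda>(c, i). (c, i, P)) zs) = sum_list (map (\<lambda>(c, i). smult c ((D ^^ i) P)) zs)" for zs
      by (induction zs) auto
    have dg: "degree (smult b P) \<le> k" using P(2) degree_smult_le order_trans by blast
    have K1: "P0 + smult b P \<in> K" using Kadd Ksmult P0 P by blast
    have d1: "degree (P0 + smult b P) \<le> k" using P0(2) dg degree_add_le by blast
    have a1: "\<forall>(a, j, P)\<in>set (map (\<lambda>(c, i). (c, i, P)) cs @ ys0). P \<in> K \<and> degree P \<le> k \<and> j \<le> m"
    proof -
      have "\<forall>(c, i, Q)\<in>set (map (\<lambda>(c, i). (c, i, P)) cs). Q \<in> K \<and> degree Q \<le> k \<and> i \<le> m"
        using cs P(1,2) by auto
      thus ?thesis using ys0 by (simp only: set_append ball_Un)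
    qed
    have e1: "tsum (x # xs) = (D ^^ Suc m) (P0 + smult b P) + tsum (map (\<lambda>(c, i). (c, i, P)) cs @ ys0)"
    proof -
      have "tsum (x # xs) = smult ((s ^^ Suc m) b) ((D ^^ Suc m) P) + tsum xs" using x j b by simp
      also have "\<dots> = (D ^^ Suc m) (smult b P) + sum_list (map (\<lambda>(c, i). smult c ((D ^^ i) P)) cs)
          + ((D ^^ Suc m) P0 + tsum ys0)" by (simp only: ce e0)
      also have "\<dots> = (D ^^ Suc m) (P0 + smult b P) + tsum (map (\<lambda>(c, i). (c, i, P)) cs @ ys0)"
        by (simp only: Dpow_add tl tsum_append) (simp add: algebra_simps)
      finally show ?thesis .
    qed
    show ?thesis using K1 d1 a1 e1 by blast
  qed
qed

lemma reduce:
  assumes surj: "\<And>a. \<exists>b. s b = a" and inj: "\<And>x. s x = 0 \<Longrightarrow> x = 0"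
    and Kadd: "\<And>P Q. P \<in> K \<Longrightarrow> Q \<in> K \<Longrightarrow> P + Q \<in> K"
    and Ksmult: "\<And>c P. P \<in> K \<Longrightarrow> smult c P \<in> K" and K0: "0 \<in> K"
    and KD: "\<And>P. P \<in> K \<Longrightarrow> D P \<in> K"
  shows "(\<forall>(a, j, P)\<in>set xs. P \<in> K \<and> degree P \<le> k \<and> j \<le> m) \<Longrightarrow> degree (tsum xs) \<le> Suc k \<Longrightarrow>
    coeff (tsum xs) (Suc k) \<in> s ` ({coeff P k | P. P \<in> K \<and> degree P \<le> k} \<union> {0})"
proof (induction m arbitrary: xs)
  case 0
  have "degree (tsum xs) \<le> k + 0" by (rule degree_tsum) (use 0 in auto)
  hence "coeff (tsum xs) (Suc k) = 0" by (simp add: coeff_eq_0)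
  thus ?case by (simp add: s0)
next
  case (Suc m)
  obtain P' ys where P': "P' \<in> K" "degree P' \<le> k"
    and ys: "\<forall>(a, j, P)\<in>set ys. P \<in> K \<and> degree P \<le> k \<and> j \<le> m"
    and e: "tsum xs = (D ^^ Suc m) P' + tsum ys"
    using step_lemma[OF surj Kadd Ksmult K0 Suc.prems(1)] by blast
  have dys: "degree (tsum ys) \<le> k + m" by (rule degree_tsum) (use ys in auto)
  have ctop: "coeff (tsum xs) (k + Suc m) = (s ^^ Suc m) (coeff P' k)"
    using dys coeff_Dpow_top[OF P'(2), of "Suc m"] by (simp add: e coeff_eq_0)
  show ?case
  proof (cases "m = 0")
    case True
    have "coeff (tsum xs) (Suc k) = s (coeff P' k)" using ctop True by simp
    thus ?thesis using P' by blast
  next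
    case False
    have "coeff (tsum xs) (k + Suc m) = 0" using Suc.prems(2) False by (simp add: coeff_eq_0)
    hence "(s ^^ Suc m) (coeff P' k) = 0" using ctop by simp
    moreover have "(s ^^ n) x = 0 \<Longrightarrow> x = 0" for n x
      by (induction n) (auto dest: inj)
    ultimately have c0: "coeff P' k = 0" by blast
    have dD: "degree (D P') \<le> k"
    proof (rule degree_le, intro allI impI)
      fix n assume n: "k < n"
      have "coeff P' (n - 1) = 0"
        using c0 P'(2) n by (cases "n - 1 = k") (auto simp: coeff_eq_0)
      moreover have "coeff P' n = 0" using P'(2) n by (simp add: coeff_eq_0)
      ultimately show "coeff (D P') n = 0" using n by (simp add: coeff_D s0 d0)
    qed
    have e2: "tsum xs = tsum ((1, m, D P') # ys)"
      using e by (simp add: funpow_swap1)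
    have "\<forall>(a, j, P)\<in>set ((1, m, D P') # ys). P \<in> K \<and> degree P \<le> k \<and> j \<le> m"
      using ys dD KD P' by auto
    from Suc.IH[OF this] Suc.prems(2) e2 show ?thesis by simp
  qed
qed

end


lemma sig_facts:
  fixes \<gamma> \<tau> :: "'a::idom"
  assumes unit: "\<gamma> dvd 1"
  shows "sig \<gamma> \<tau> (p + q) = sig \<gamma> \<tau> p + sig \<gamma> \<tau> q"
    and "sig \<gamma> \<tau> (p * q) = sig \<gamma> \<tau> p * sig \<gamma> \<tau> q"
    and "p \<noteq> 0 \<Longrightarrow> sig \<gamma> \<tau> p \<noteq> 0"
    and "\<exists>q. sig \<gamma> \<tau> q = p"
proof -
  show "sig \<gamma> \<tau> (p + q) = sig \<gamma> \<tau> p + sig \<gamma> \<tau> q" by (simp add: sig_def pcompose_add)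
  show "sig \<gamma> \<tau> (p * q) = sig \<gamma> \<tau> p * sig \<gamma> \<tau> q" by (simp add: sig_def pcompose_mult)
  have g0: "\<gamma> \<noteq> 0" using unit by auto
  show "p \<noteq> 0 \<Longrightarrow> sig \<gamma> \<tau> p \<noteq> 0"
    using g0 by (simp add: sig_def pcompose_eq_0_iff)
  obtain g where g: "1 = \<gamma> * g" using unit by (auto simp: dvd_def)
  have "pcompose [:- (g * \<tau>), g:] [:\<tau>, \<gamma>:] = [:0, 1:]"
    using g by (simp add: pcompose_pCons algebra_simps)
  hence "sig \<gamma> \<tau> (pcompose p [:- (g * \<tau>), g:]) = p"
    by (simp add: sig_def pcompose_assoc[symmetric])
  thus "\<exists>q. sig \<gamma> \<tau> q = p" by blast
qed


theorem mainTheorem13: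
  fixes \<gamma> \<tau> :: "'a::idom" and \<delta> :: "'a poly \<Rightarrow> 'a poly"
    and L :: "'a poly poly" and r k :: nat
  assumes pid: "is_pid TYPE('a)"
    and unit: "\<gamma> dvd 1"
    and d_add: "\<And>p q. \<delta> (p + q) = \<delta> p + \<delta> q"
    and d_lin: "\<And>c p. \<delta> (smult c p) = smult c (\<delta> p)"
    and d_der: "\<And>p q. \<delta> (p * q) = sig \<gamma> \<tau> p * \<delta> q + \<delta> p * q"
    and d_deg: "degree (\<delta> [:0, 1:]) \<le> 1"
    and ord: "degree L = r" and rpos: "r > 0"
    and kr: "k \<ge> r"
  shows "ore_left_ideal (sig \<gamma> \<tau>) \<delta> (Mk \<gamma> \<tau> \<delta> L k)
           = ore_left_ideal (sig \<gamma> \<tau>) \<delta> (Mk \<gamma> \<tau> \<delta> L (Suc k))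
         \<longleftrightarrow> sig \<gamma> \<tau> ` Ik \<gamma> \<tau> \<delta> L k = Ik \<gamma> \<tau> \<delta> L (Suc k)"
proof -
  let ?s = "sig \<gamma> \<tau>"
  note sf = sig_facts[OF unit]
  interpret F: fder ?s \<delta>
    by unfold_locales (simp_all add: sf d_add d_der)
  interpret R: ore ?s \<delta>
    by unfold_locales (simp_all add: sf d_add d_der)
  interpret E: ore "sig_ext ?s" "del_ext ?s \<delta>"
    by unfold_locales (simp_all add: F.se_add F.se_mult F.de_add F.de_mult)
  let ?e = "ore_embed :: 'a poly poly \<Rightarrow> 'a poly fract poly"
  have f0: "Fract (0::'a poly) 1 = 0" by (simp add: Zero_fract_def)
  have e_add: "?e (P + Q) = ?e P + ?e Q" for P Q
    by (rule poly_eqI) (simp add: ore_embed_def coeff_map_poly f0)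
  have e_smult: "?e (smult c P) = smult (Fract c 1) (?e P)" for c P
    by (rule poly_eqI) (simp add: ore_embed_def coeff_map_poly f0)
  have e_D: "?e (ore_D ?s \<delta> P) = ore_D (sig_ext ?s) (del_ext ?s \<delta>) (?e P)" for P
    by (rule poly_eqI) (simp add: ore_embed_def coeff_map_poly f0 R.coeff_D E.coeff_D F.se_emb F.de_emb)
  let ?C = "cont \<gamma> \<tau> \<delta> L"
  have C0: "0 \<in> ?C" unfolding cont_def
    by (rule CollectI, rule exI[of _ 0]) (simp add: ore_embed_def E.ore_mult_zero1)
  have Cadd: "P + Q \<in> ?C" if "P \<in> ?C" "Q \<in> ?C" for P Q
  proof -
    from that obtain A B where "?e P = ore_mult (sig_ext ?s) (del_ext ?s \<delta>) A (?e L)"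
      "?e Q = ore_mult (sig_ext ?s) (del_ext ?s \<delta>) B (?e L)" unfolding cont_def by blast
    thus ?thesis unfolding cont_def by (intro CollectI exI[of _ "A + B"]) (simp add: e_add E.ore_mult_add1)
  qed
  have Csmult: "smult c P \<in> ?C" if "P \<in> ?C" for c P
  proof -
    from that obtain A where "?e P = ore_mult (sig_ext ?s) (del_ext ?s \<delta>) A (?e L)"
      unfolding cont_def by blast
    thus ?thesis unfolding cont_def
      by (intro CollectI exI[of _ "smult (Fract c 1) A"]) (simp add: e_smult E.ore_mult_smult1)
  qed
  have CD: "ore_D ?s \<delta> P \<in> ?C" if "P \<in> ?C" for P
  proof -
    from that obtain A where "?e P = ore_mult (sig_ext ?s) (del_ext ?s \<delta>) A (?e L)"
      unfolding cont_def by blast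
    thus ?thesis unfolding cont_def
      by (intro CollectI exI[of _ "ore_D (sig_ext ?s) (del_ext ?s \<delta>) A"]) (simp add: e_D E.ore_mult_D1)
  qed
  have Cdiff: "P - Q \<in> ?C" if "P \<in> ?C" "Q \<in> ?C" for P Q
    using Cadd[OF that(1) Csmult[OF that(2), of "-1"]] by simp
  let ?T = "\<lambda>n. ore_left_ideal ?s \<delta> (Mk \<gamma> \<tau> \<delta> L n)"
  have li_mem: "ore_mult ?s \<delta> A x \<in> ore_left_ideal ?s \<delta> S" if "x \<in> S" for A x S
    unfolding ore_left_ideal_def using that by (intro CollectI exI[of _ "[(A, x)]"]) simp
  have li_add: "P + Q \<in> ore_left_ideal ?s \<delta> S" if "P \<in> ore_left_ideal ?s \<delta> S" "Q \<in> ore_left_ideal ?s \<delta> S" for P Q S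
  proof -
    from that obtain xs ys where "set (map snd xs) \<subseteq> S" "P = sum_list (map (\<lambda>(A, s). ore_mult ?s \<delta> A s) xs)"
      "set (map snd ys) \<subseteq> S" "Q = sum_list (map (\<lambda>(A, s). ore_mult ?s \<delta> A s) ys)"
      unfolding ore_left_ideal_def by blast
    thus ?thesis unfolding ore_left_ideal_def by (intro CollectI exI[of _ "xs @ ys"]) simp
  qed
  have li_sub: "ore_left_ideal ?s \<delta> S' \<subseteq> ore_left_ideal ?s \<delta> S"
    if h: "\<And>A x. x \<in> S' \<Longrightarrow> ore_mult ?s \<delta> A x \<in> ore_left_ideal ?s \<delta> S" for S S'
  proof
    fix P assume "P \<in> ore_left_ideal ?s \<delta> S'"
    then obtain xs where xs: "set (map snd xs) \<subseteq> S'" "P = sum_list (map (\<lambda>(A, s). ore_mult ?s \<delta> A s) xs)"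
      unfolding ore_left_ideal_def by blast
    have "sum_list (map (\<lambda>(A, s). ore_mult ?s \<delta> A s) xs) \<in> ore_left_ideal ?s \<delta> S"
      using xs(1)
    proof (induction xs)
      case Nil
      show ?case unfolding ore_left_ideal_def by (intro CollectI exI[of _ "[]"]) simp
    next
      case (Cons y xs)
      obtain A x where y: "y = (A, x)" by (cases y)
      show ?case using Cons y by (simp add: li_add h)
    qed
    thus "P \<in> ore_left_ideal ?s \<delta> S" using xs by simp
  qed
  have conv: "\<exists>ys. (\<forall>(a, j, P)\<in>set ys. P \<in> Mk \<gamma> \<tau> \<delta> L k) \<and> R.tsum ys = Q"
    if "Q \<in> ?T k" for Q
  proof -
    from that obtain xs where xs: "set (map snd xs) \<subseteq> Mk \<gamma> \<tau> \<delta> L k"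
      "Q = sum_list (map (\<lambda>(A, s). ore_mult ?s \<delta> A s) xs)"
      unfolding ore_left_ideal_def by blast
    have one: "R.tsum (map (\<lambda>i. (coeff A i, i, x)) [0..<Suc n]) = (\<Sum>i\<le>n. smult (coeff A i) ((R.D ^^ i) x))" for A x n
      by (induction n) (simp_all add: R.tsum_def)
    have "\<exists>ys. (\<forall>(a, j, P)\<in>set ys. P \<in> Mk \<gamma> \<tau> \<delta> L k) \<and> R.tsum ys = sum_list (map (\<lambda>(A, s). ore_mult ?s \<delta> A s) xs)"
      using xs(1)
    proof (induction xs)
      case Nil
      show ?case by (rule exI[of _ "[]"]) simp
    next
      case (Cons y xs)
      obtain A x where y: "y = (A, x)" by (cases y)
      from Cons y obtain ys where ys: "\<forall>(a, j, P)\<in>set ys. P \<in> Mk \<gamma> \<tau> \<delta> L k"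
        "R.tsum ys = sum_list (map (\<lambda>(A, s). ore_mult ?s \<delta> A s) xs)" by auto
      have x: "x \<in> Mk \<gamma> \<tau> \<delta> L k" using Cons.prems y by simp
      let ?zs = "map (\<lambda>i. (coeff A i, i, x)) [0..<Suc (degree A)] @ ys"
      have "R.tsum ?zs = ore_mult ?s \<delta> A x + R.tsum ys"
        unfolding R.tsum_append one ore_mult_def ..
      also have "\<dots> = sum_list (map (\<lambda>(A, s). ore_mult ?s \<delta> A s) (y # xs))"
        unfolding y ys(2) by simp
      finally have e: "R.tsum ?zs = sum_list (map (\<lambda>(A, s). ore_mult ?s \<delta> A s) (y # xs))" .
      have "\<forall>(a, j, P)\<in>set (map (\<lambda>i. (coeff A i, i, x)) [0..<Suc (degree A)]). P \<in> Mk \<gamma> \<tau> \<delta> L k"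
        using x by (simp only: set_map) auto
      hence "\<forall>(a, j, P)\<in>set ?zs. P \<in> Mk \<gamma> \<tau> \<delta> L k" using ys(1) by (simp only: set_append ball_Un)
      with e show ?case by blast
    qed
    thus ?thesis using xs by simp
  qed
  have Ik_eq: "Ik \<gamma> \<tau> \<delta> L k = {coeff P k | P. P \<in> ?C \<and> degree P \<le> k} \<union> {0}"
    by (auto simp: Ik_def Mk_def)
  have fwd: "?s ` Ik \<gamma> \<tau> \<delta> L k \<subseteq> Ik \<gamma> \<tau> \<delta> L (Suc k)"
  proof
    fix z assume "z \<in> ?s ` Ik \<gamma> \<tau> \<delta> L k"
    then obtain y where y: "y \<in> Ik \<gamma> \<tau> \<delta> L k" "z = ?s y" by blast
    show "z \<in> Ik \<gamma> \<tau> \<delta> L (Suc k)"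
    proof (cases "y = 0")
      case True
      thus ?thesis using y F.s0 by (simp add: Ik_def)
    next
      case False
      then obtain P where P: "P \<in> Mk \<gamma> \<tau> \<delta> L k" "y = coeff P k" using y by (auto simp: Ik_def)
      have "R.D P \<in> Mk \<gamma> \<tau> \<delta> L (Suc k)" using P CD R.degree_D by (simp add: Mk_def)
      moreover have "coeff (R.D P) (Suc k) = z" using P y R.coeff_D_top by (simp add: Mk_def)
      ultimately show ?thesis by (auto simp: Ik_def)
    qed
  qed
  show ?thesis
  proof
    assume eq: "?T k = ?T (Suc k)"
    show "?s ` Ik \<gamma> \<tau> \<delta> L k = Ik \<gamma> \<tau> \<delta> L (Suc k)"
    proof (rule antisym[OF fwd], rule subsetI)
      fix z assume z: "z \<in> Ik \<gamma> \<tau> \<delta> L (Suc k)"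
      show "z \<in> ?s ` Ik \<gamma> \<tau> \<delta> L k"
      proof (cases "z = 0")
        case True
        have "0 \<in> Ik \<gamma> \<tau> \<delta> L k" by (simp add: Ik_def)
        thus ?thesis using F.s0 True by (metis image_eqI)
      next
        case False
        then obtain Q where Q: "Q \<in> Mk \<gamma> \<tau> \<delta> L (Suc k)" "z = coeff Q (Suc k)" using z by (auto simp: Ik_def)
        have "ore_mult ?s \<delta> 1 Q \<in> ?T (Suc k)" using Q by (intro li_mem)
        hence "Q \<in> ?T k" using eq R.ore_mult_one by simp
        then obtain ys where ys: "\<forall>(a, j, P)\<in>set ys. P \<in> Mk \<gamma> \<tau> \<delta> L k" "R.tsum ys = Q"
          using conv by blast
        define m where "m = Max (insert 0 (set (map (\<lambda>(a, j, P). j) ys)))"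
        have jm: "\<forall>(a, j, P)\<in>set ys. P \<in> ?C \<and> degree P \<le> k \<and> j \<le> m"
        proof (intro ballI, clarify)
          fix a j P assume m: "(a, j, P) \<in> set ys"
          hence "j \<in> insert 0 (set (map (\<lambda>(a, j, P). j) ys))" by force
          hence "j \<le> m" unfolding m_def by (intro Max_ge) auto
          moreover have "P \<in> Mk \<gamma> \<tau> \<delta> L k" using ys(1) m by auto
          ultimately show "P \<in> ?C \<and> degree P \<le> k \<and> j \<le> m" by (simp add: Mk_def)
        qed
        have dQ: "degree (R.tsum ys) \<le> Suc k" using ys(2) Q(1) by (simp add: Mk_def)
        have inj: "\<And>x. ?s x = 0 \<Longrightarrow> x = 0" using sf(3) by blast
        have "coeff (R.tsum ys) (Suc k) \<in> ?s ` ({coeff P k | P. P \<in> ?C \<and> degree P \<le> k} \<union> {0})"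
          by (rule R.reduce[OF sf(4) inj Cadd Csmult C0 CD jm dQ])
        thus ?thesis unfolding ys(2) Q(2) Ik_eq .
      qed
    qed
  next
    assume eq: "?s ` Ik \<gamma> \<tau> \<delta> L k = Ik \<gamma> \<tau> \<delta> L (Suc k)"
    have "?T (Suc k) \<subseteq> ?T k"
    proof (rule li_sub)
      fix A x assume x: "x \<in> Mk \<gamma> \<tau> \<delta> L (Suc k)"
      have "coeff x (Suc k) \<in> Ik \<gamma> \<tau> \<delta> L (Suc k)" using x by (auto simp: Ik_def)
      then obtain y where y: "y \<in> Ik \<gamma> \<tau> \<delta> L k" "coeff x (Suc k) = ?s y" using eq by blast
      obtain P2 where P2: "P2 \<in> Mk \<gamma> \<tau> \<delta> L k" "coeff P2 k = y"
      proof (cases "y = 0")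
        case True
        show ?thesis by (rule that[of 0]) (simp_all add: Mk_def C0 True)
      next
        case False
        thus ?thesis using y that by (auto simp: Ik_def)
      qed
      define P1 where "P1 = x - R.D P2"
      have P1C: "P1 \<in> ?C" unfolding P1_def using x P2 Cdiff CD by (simp add: Mk_def)
      have "degree P1 \<le> k"
      proof (rule degree_le, intro allI impI)
        fix n assume n: "k < n"
        have dx: "degree x \<le> Suc k" and dP: "degree P2 \<le> k" using x P2 by (auto simp: Mk_def)
        show "coeff P1 n = 0"
        proof (cases "n = Suc k")
          case True
          thus ?thesis using y P2 dP by (simp add: P1_def R.coeff_D_top)
        next
          case False
          hence "Suc k < n" using n by simp
          moreover have "degree (R.D P2) \<le> Suc k" using R.degree_D[OF dP] .
          ultimately show ?thesis using dx by (simp add: P1_def coeff_eq_0)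
        qed
      qed
      hence P1M: "P1 \<in> Mk \<gamma> \<tau> \<delta> L k" using P1C by (simp add: Mk_def)
      have "x = P1 + R.D P2" by (simp add: P1_def)
      hence "ore_mult ?s \<delta> A x = ore_mult ?s \<delta> A P1 + ore_mult ?s \<delta> (pCons 0 A) P2"
        by (simp add: R.ore_mult_add2 R.ore_mult_pCons0)
      thus "ore_mult ?s \<delta> A x \<in> ?T k" using P1M P2 by (simp add: li_add li_mem)
    qed
    moreover have "?T k \<subseteq> ?T (Suc k)"
      by (rule li_sub, rule li_mem) (auto simp: Mk_def)
    ultimately show "?T k = ?T (Suc k)" by blast
  qed
qed

end
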